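(* Let $X$ be a separable topological space, let $Y$ be a scattered compact space, and let $f:X\times Y\to\overline{\mathbb R}$ be a separately continuous function. Then $(\wedge_f,\vee_f)$ is a stable pair of Hahn on $X$.
   Context: Compact spaces are Hausdorff; $Y$ is scattered if every non-empty subset has a point isolated in it. $\overline{\mathbb R}=[-\infty,+\infty]$. $\wedge_f(x)=\inf_{y\in Y}f(x,y)$, $\vee_f(x)=\sup_{y\in Y}f(x,y)$. A pair $(g,h)$ of functions $X\to\overline{\mathbb R}$ is a stable pair of Hahn if there are continuous $u_n:X\to\overline{\mathbb R}$ with $g(x)=\min_{n\in\mathbb N}u_n(x)$ and $h(x)=\max_{n\in\mathbb N}u_n(x)$ for all $x\in X$ (attained). *)

theory Defs
  imports "HOL-Analysis.Analysis"
begin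

definition separable_space :: "'a::topological_space itself \<Rightarrow> bool" where
  "separable_space _ \<longleftrightarrow> (\<exists>D::'a set. countable D \<and> closure D = UNIV)"

definition scattered_space :: "'a::topological_space itself \<Rightarrow> bool" where
  "scattered_space _ \<longleftrightarrow>
     (\<forall>S::'a set. S \<noteq> {} \<longrightarrow> (\<exists>y\<in>S. \<exists>U. open U \<and> U \<inter> S = {y}))"

definition separately_continuous :: "('a::topological_space \<times> 'b::topological_space \<Rightarrow> 'c::topological_space) \<Rightarrow> bool" where
  "separately_continuous f \<longleftrightarrow>
     (\<forall>x. continuous_on UNIV (\<lambda>y. f (x, y))) \<and> (\<forall>y. continuous_on UNIV (\<lambda>x. f (x, y)))"

definition stable_pair_Hahn :: "('a::topological_space \<Rightarrow> ereal) \<Rightarrow> ('a \<Rightarrow> ereal) \<Rightarrow> bool" where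
  "stable_pair_Hahn g h \<longleftrightarrow>
     (\<exists>u::nat \<Rightarrow> 'a \<Rightarrow> ereal. (\<forall>n. continuous_on UNIV (u n)) \<and>
        (\<forall>x. (\<exists>n. u n x = g x) \<and> (\<forall>n. g x \<le> u n x) \<and>
             (\<exists>n. u n x = h x) \<and> (\<forall>n. u n x \<le> h x)))"

definition inf_f :: "('a \<times> 'b \<Rightarrow> ereal) \<Rightarrow> 'a \<Rightarrow> ereal" where
  "inf_f f x = (INF y. f (x, y))"

definition sup_f :: "('a \<times> 'b \<Rightarrow> ereal) \<Rightarrow> 'a \<Rightarrow> ereal" where
  "sup_f f x = (SUP y. f (x, y))"

end

theory Submission
  imports Defs
begin

lemma scat_countable:
  fixes K :: "'c::second_countable_topology set"
  assumes sc: "\<And>S. S \<subseteq> K \<Longrightarrow> S \<noteq> {} \<Longrightarrow> \<exists>y\<in>S. \<exists>U. open U \<and> U \<inter> S = {y}"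
  shows "countable K"
proof -
  obtain B :: "'c set set" where B: "countable B" "topological_basis B"
    using ex_countable_basis by blast
  define U where "U = (\<Union>b\<in>{b \<in> B. countable (b \<inter> K)}. b \<inter> K)"
  have cU: "countable U"
    unfolding U_def
    by (rule countable_UN) (use B(1) in auto)
  have "K - U = {}"
  proof (rule ccontr)
    assume "K - U \<noteq> {}"
    then obtain y V where y: "y \<in> K - U" "open V" "V \<inter> (K - U) = {y}"
      using sc[of "K - U"] by blast
    then obtain b where b: "b \<in> B" "y \<in> b" "b \<subseteq> V"
      using topological_basisE[OF B(2) y(2)] by blast
    have "b \<inter> K \<subseteq> insert y U"
    proof
      fix z assume z: "z \<in> b \<inter> K"
      show "z \<in> insert y U"
      proof (cases "z \<in> U")
        case False
        hence "z \<in> V \<inter> (K - U)" using z b(3) by auto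
        thus ?thesis using y(3) by simp
      qed simp
    qed
    hence "countable (b \<inter> K)" by (rule countable_subset) (use cU in simp)
    hence "b \<in> {b \<in> B. countable (b \<inter> K)}" using b(1) by simp
    hence "b \<inter> K \<subseteq> U" unfolding U_def by (rule UN_upper)
    thus False using y(1) b(2) by auto
  qed
  hence "K \<subseteq> U" by simp
  thus ?thesis by (rule countable_subset[OF _ cU])
qed

lemma Hausdorff_euclidean_t2: "Hausdorff_space (euclidean :: 'b::t2_space topology)"
  unfolding Hausdorff_space_def disjnt_def
  using hausdorff by fastforce

lemma fun_compact_closed:
  fixes K :: "('i \<Rightarrow> 'b::t2_space) set"
  assumes "compact K"
  shows "closed K"
proof -
  have "\<forall>i\<in>(UNIV :: 'i set). Hausdorff_space (euclidean :: 'b topology)"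
    using Hausdorff_euclidean_t2[where 'b='b] by blast
  hence H0: "Hausdorff_space (product_topology (\<lambda>i. euclidean :: 'b topology) (UNIV :: 'i set))"
    unfolding Hausdorff_space_product_topology by blast
  have H: "Hausdorff_space (euclidean :: ('i \<Rightarrow> 'b) topology)"
    using H0 unfolding euclidean_product_topology .
  have "compactin euclidean K" using assms by (simp only: compactin_euclidean_iff)
  hence "closedin euclidean K" by (rule compactin_imp_closedin[OF H])
  thus ?thesis by (simp only: closed_closedin)
qed

lemma image_scat:
  fixes Q :: "'b::topological_space \<Rightarrow> 'c::topological_space"
  assumes cc: "\<And>K::'c set. compact K \<Longrightarrow> closed K"
    and cpt: "compact (UNIV :: 'b set)"
    and sc: "scattered_space TYPE('b)"
    and cQ: "continuous_on UNIV Q"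
    and S: "S \<subseteq> range Q" "S \<noteq> {}"
  shows "\<exists>y\<in>S. \<exists>U. open U \<and> U \<inter> S = {y}"
proof -
  define CS where "CS = closure S"
  have cr: "compact (range Q)" using compact_continuous_image[OF cQ cpt] .
  hence "closed (range Q)" by (rule cc)
  hence CSr: "CS \<subseteq> range Q" unfolding CS_def using S closure_minimal by blast
  have CSne: "CS \<noteq> {}" unfolding CS_def using S closure_subset by blast
  define A where "A = {U. open U \<and> CS \<subseteq> Q ` (- U)}"
  have "\<exists>M\<in>A. \<forall>X\<in>A. M \<subseteq> X \<longrightarrow> X = M"
  proof (rule subset_Zorn_nonempty)
    show "A \<noteq> {}" using CSr unfolding A_def by auto
  next
    fix C assume Cne: "C \<noteq> {}" and ch: "subset.chain A C"
    have CA: "C \<subseteq> A" using ch by (simp add: subset_chain_def)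
    have "open (\<Union>C)" using CA unfolding A_def by auto
    moreover have "CS \<subseteq> Q ` (- \<Union>C)"
    proof
      fix s assume s: "s \<in> CS"
      define F where "F = (\<lambda>U. - U \<inter> Q -` {s}) ` C"
      have "UNIV \<inter> \<Inter>F \<noteq> {}"
      proof (rule compact_imp_fip[OF cpt])
        fix T assume "T \<in> F"
        then obtain U where "U \<in> C" "T = - U \<inter> Q -` {s}" unfolding F_def by blast
        moreover have "open U" using CA \<open>U \<in> C\<close> unfolding A_def by auto
        moreover have "closed (Q -` {s})"
        proof -
          have "closed {s}" by (rule cc) simp
          thus ?thesis using closed_vimage_Int[OF _ cQ closed_UNIV] by simp
        qed
        ultimately show "closed T" by auto
      next
        fix F' assume F': "finite F'" "F' \<subseteq> F"
        then obtain C' where C': "C' \<subseteq> C" "finite C'" "F' = (\<lambda>U. - U \<inter> Q -` {s}) ` C'"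
          using finite_subset_image[OF F'(1) F'(2)[unfolded F_def]] by blast
        show "UNIV \<inter> \<Inter>F' \<noteq> {}"
        proof (cases "C' = {}")
          case True
          thus ?thesis using C'(3) by simp
        next
          case False
          have ch1: "C \<subseteq> A" and ch2: "\<forall>X\<in>C. \<forall>Y\<in>C. X \<subseteq> Y \<or> Y \<subseteq> X"
            using ch by (simp_all add: subset_chain_def)
          have "subset.chain A C'" unfolding subset_chain_def
          proof (intro conjI ballI)
            show "C' \<subseteq> A" using C'(1) ch1 by (rule subset_trans)
            fix X Y assume "X \<in> C'" "Y \<in> C'"
            hence "X \<in> C" "Y \<in> C" using C'(1) by (auto simp only: subsetD)
            thus "X \<subseteq> Y \<or> Y \<subseteq> X" using ch2 by simp
          qed
          hence "\<Union>C' \<in> C'" by (rule Union_in_chain[OF C'(2) False])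
          hence "\<Union>C' \<in> A" using C' CA by blast
          then obtain y where "y \<notin> \<Union>C'" "Q y = s" using s unfolding A_def by blast
          hence "y \<in> \<Inter>F'" using C'(3) by auto
          thus ?thesis by blast
        qed
      qed
      then obtain y where "y \<in> \<Inter>F" by blast
      hence "y \<notin> \<Union>C" "Q y = s" using Cne unfolding F_def by auto
      thus "s \<in> Q ` (- \<Union>C)" by blast
    qed
    ultimately show "\<Union>C \<in> A" unfolding A_def by blast
  qed
  then obtain U where U: "U \<in> A" and Umax: "\<And>X. X \<in> A \<Longrightarrow> U \<subseteq> X \<Longrightarrow> X = U"
    by blast
  have oU: "open U" and CSU: "CS \<subseteq> Q ` (- U)" using U unfolding A_def by auto
  have nU: "- U \<noteq> {}"
  proof
    assume "- U = {}"
    hence "Q ` (- U) = {}" by simp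
    thus False using CSU CSne by simp
  qed
  have "\<exists>y\<in>- U. \<exists>V. open V \<and> V \<inter> (- U) = {y}"
    using sc nU unfolding scattered_space_def by simp
  then obtain t V where t: "t \<in> - U" "open V" "V \<inter> (- U) = {t}"
    by blast
  have tV: "t \<in> V" using t(3) by auto
  define M' where "M' = - (U \<union> V)"
  define W where "W = - Q ` M'"
  have oUV: "open (U \<union> V)" using oU t(2) by (rule open_Un)
  have "U \<union> V \<notin> A"
  proof
    assume "U \<union> V \<in> A"
    hence "U \<union> V = U" by (rule Umax) simp
    thus False using tV t(1) by auto
  qed
  hence "\<not> CS \<subseteq> Q ` M'" using oUV unfolding A_def M'_def by simp
  then obtain s0 where s0: "s0 \<in> CS" "s0 \<in> W" unfolding W_def by auto
  have "closed M'" unfolding M'_def using oUV by (rule closed_Compl)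
  hence "compact (UNIV \<inter> M')" by (rule compact_Int_closed[OF cpt])
  hence "compact M'" by simp
  hence "compact (Q ` M')"
    by (rule compact_continuous_image[OF continuous_on_subset[OF cQ subset_UNIV]])
  hence oW: "open W" unfolding W_def by (intro open_Compl cc)
  have sub: "W \<inter> CS \<subseteq> {Q t}"
  proof
    fix s assume s: "s \<in> W \<inter> CS"
    hence "s \<in> Q ` (- U)" using CSU by auto
    then obtain m where m: "m \<in> - U" "Q m = s" by auto
    have "m \<notin> M'" using s m(2) unfolding W_def by auto
    hence "m \<in> V" using m(1) unfolding M'_def by auto
    hence "m \<in> V \<inter> (- U)" using m(1) by simp
    hence "m = t" using t(3) by simp
    thus "s \<in> {Q t}" using m by simp
  qed
  hence "s0 = Q t" using s0 by auto
  hence Qt: "Q t \<in> CS" "Q t \<in> W" using s0 by auto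
  have "W \<inter> closure S \<noteq> {}" using Qt unfolding CS_def by auto
  hence "W \<inter> S \<noteq> {}" using open_Int_closure_eq_empty[OF oW] by simp
  then obtain s1 where s1: "s1 \<in> S" "s1 \<in> W" by auto
  have SCS: "S \<subseteq> CS" unfolding CS_def by (rule closure_subset)
  have "s1 \<in> {Q t}" using sub s1 SCS by auto
  hence QtS: "Q t \<in> S" using s1 by simp
  have "W \<inter> S \<subseteq> {Q t}" using sub SCS by auto
  hence "W \<inter> S = {Q t}" using QtS Qt(2) by auto
  thus ?thesis using oW QtS by auto
qed

theorem theorem4p2:
  fixes f :: "'a::topological_space \<times> 'b::t2_space \<Rightarrow> ereal"
  assumes "separable_space TYPE('a)"
    and "compact (UNIV :: 'b set)"
    and "scattered_space TYPE('b)"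
    and "separately_continuous f"
  shows "stable_pair_Hahn (inf_f f) (sup_f f)"
proof -
  obtain D :: "'a set" where D: "countable D" "closure D = UNIV"
    using assms(1) unfolding separable_space_def by blast
  have Dne: "D \<noteq> {}" using D(2) by auto
  define d where "d = from_nat_into D"
  have dD: "\<And>n. d n \<in> D" unfolding d_def using Dne from_nat_into by blast
  have Dd: "\<And>x. x \<in> D \<Longrightarrow> \<exists>n. d n = x" unfolding d_def by (metis from_nat_into_surj[OF D(1)])
  have c1: "\<And>x. continuous_on UNIV (\<lambda>y. f (x, y))" and c2: "\<And>y. continuous_on UNIV (\<lambda>x. f (x, y))"
    using assms(4) unfolding separately_continuous_def by auto
  define Q where "Q = (\<lambda>y. (\<lambda>n. f (d n, y)))"
  have cQ: "continuous_on UNIV Q" unfolding Q_def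
    by (rule continuous_on_coordinatewise_then_product) (rule c1)
  have cK: "countable (range Q)"
    by (rule scat_countable, rule image_scat[OF fun_compact_closed assms(2) assms(3) cQ]) auto
  define e where "e = from_nat_into (range Q)"
  define c where "c = (\<lambda>n. SOME y. Q y = e n)"
  have Qc: "\<And>n. Q (c n) = e n"
  proof -
    fix n
    have "e n \<in> range Q" unfolding e_def by (rule from_nat_into) auto
    thus "Q (c n) = e n" unfolding c_def by (metis (mono_tags, lifting) imageE someI)
  qed
  have eQ: "\<And>y. \<exists>n. e n = Q y" unfolding e_def by (metis from_nat_into_surj[OF cK] rangeI)
  have eqv: "f (x, y) = f (x, y')" if "Q y = Q y'" for x y y'
  proof -
    have cl: "closed {x. f (x, y) = f (x, y')}" by (rule closed_Collect_eq[OF c2 c2])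
    have "D \<subseteq> {x. f (x, y) = f (x, y')}"
    proof
      fix z assume "z \<in> D"
      then obtain n where "d n = z" using Dd by blast
      thus "z \<in> {x. f (x, y) = f (x, y')}" using that fun_cong[OF that, of n] unfolding Q_def by auto
    qed
    hence "closure D \<subseteq> {x. f (x, y) = f (x, y')}" using cl closure_minimal by blast
    thus ?thesis using D(2) by auto
  qed
  have rep: "\<exists>n. f (x, c n) = f (x, y)" for x y
  proof -
    obtain n where "e n = Q y" using eQ by blast
    hence "Q (c n) = Q y" using Qc by simp
    hence "f (x, c n) = f (x, y)" by (rule eqv)
    thus ?thesis by blast
  qed
  show ?thesis unfolding stable_pair_Hahn_def
  proof (intro exI[of _ "\<lambda>n x. f (x, c n)"] conjI allI)
    fix n show "continuous_on UNIV (\<lambda>x. f (x, c n))" by (rule c2)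
  next
    fix x
    obtain y0 where y0: "\<forall>y. f (x, y0) \<le> f (x, y)"
      using continuous_attains_inf[OF assms(2) _ c1[of x]] by auto
    obtain y1 where y1: "\<forall>y. f (x, y) \<le> f (x, y1)"
      using continuous_attains_sup[OF assms(2) _ c1[of x]] by auto
    have i: "inf_f f x = f (x, y0)" unfolding inf_f_def
    proof (rule antisym)
      show "(INF y. f (x, y)) \<le> f (x, y0)" by (rule INF_lower) simp
      show "f (x, y0) \<le> (INF y. f (x, y))" by (rule INF_greatest) (use y0 in simp)
    qed
    have s: "sup_f f x = f (x, y1)" unfolding sup_f_def
    proof (rule antisym)
      show "f (x, y1) \<le> (SUP y. f (x, y))" by (rule SUP_upper) simp
      show "(SUP y. f (x, y)) \<le> f (x, y1)" by (rule SUP_least) (use y1 in simp)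
    qed
    obtain n0 where "f (x, c n0) = f (x, y0)" using rep by blast
    thus "\<exists>n. f (x, c n) = inf_f f x" using i by metis
    obtain n1 where "f (x, c n1) = f (x, y1)" using rep by blast
    thus "\<exists>n. f (x, c n) = sup_f f x" using s by metis
    fix n
    show "inf_f f x \<le> f (x, c n)" using i y0 by simp
    show "f (x, c n) \<le> sup_f f x" using s y1 by simp
  qed
qed

end
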